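(* All framed hyperbolic $3$-manifolds $(\mathbb{H}^3/\Gamma,f)\in\mathcal{H}$ such that $\Omega(\Gamma)\ne\varnothing$ lie in the same path component of $\mathcal{H}$ (namely that of $(\mathbb{H}^3,\mathcal{O}_O)$).
   Context: A Kleinian group is a discrete torsion-free subgroup $\Gamma\le\mathrm{PSL}_2\mathbb{C}$; its limit set $\Lambda(\Gamma)$ is $\overline{\Gamma\cdot x}\cap S^2_\infty$ for any $x\in\mathbb{H}^3$, and $\Omega(\Gamma)=S^2_\infty\setminus\Lambda(\Gamma)$ is its domain of discontinuity. $\mathcal{H}$ is the set of framed hyperbolic $3$-manifolds $(M,f)$ ($f$ a positively oriented orthonormal frame) modulo frame-preserving orientation-preserving isometry, with the geometric topology, i.e. the Chabauty topology transported via the bijection $\Gamma\mapsto(\mathbb{H}^3/\Gamma,\pi_\Gamma(\mathcal{O}_O))$, where $\mathcal{O}_O$ is a fixed frame of $\mathbb{H}^3$ at a fixed point $O$ ($\Gamma_n\to\Gamma$ iff accumulation points of sequences $\psi_n\in\Gamma_n$ lie in $\Gamma$ and every element of $\Gamma$ is a limit of some $\psi_n\in\Gamma_n$). *)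

theory Defs
  imports "HOL-Analysis.Analysis"
begin

text \<open>PSL(2,C) is modelled through SL(2,C): a subgroup of PSL(2,C) is identified with its
  preimage in SL(2,C) (a subgroup containing -I).  Matrices are complex^2^2.\<close>

type_synonym cmat = "complex^2^2"

definition SL2C :: "cmat set" where
  "SL2C = {A. det A = 1}"

definition mpow :: "cmat \<Rightarrow> nat \<Rightarrow> cmat" where
  "mpow A n = (((**) A) ^^ n) (mat 1)"

definition pm_one :: "cmat set" where
  "pm_one = {mat 1, - mat 1}"

definition psl_subgroup :: "cmat set \<Rightarrow> bool" where
  "psl_subgroup G \<longleftrightarrow> G \<subseteq> SL2C \<and> pm_one \<subseteq> G \<and>
     (\<forall>A\<in>G. \<forall>B\<in>G. A ** B \<in> G) \<and> (\<forall>A\<in>G. matrix_inv A \<in> G)"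

definition kleinian :: "cmat set \<Rightarrow> bool" where
  "kleinian G \<longleftrightarrow> psl_subgroup G \<and> (\<forall>A. \<not> A islimpt G) \<and>
     (\<forall>A\<in>G. \<forall>n>0. mpow A n \<in> pm_one \<longrightarrow> A \<in> pm_one)"

text \<open>Upper half-space model: a point (z,t) with t > 0; Poincare extension of the Moebius
  map of A.\<close>
definition hyp_act :: "cmat \<Rightarrow> complex \<times> real \<Rightarrow> complex \<times> real" where
  "hyp_act A p = (let z = fst p; t = snd p;
      a = A$1$1; b = A$1$2; c = A$2$1; d = A$2$2;
      D = (cmod (c*z + d))^2 + (cmod c)^2 * t^2
    in (((a*z + b) * cnj (c*z + d) + a * cnj c * of_real (t^2)) / of_real D, t / D))"

definition base_point :: "complex \<times> real" where
  "base_point = (0, 1)"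

text \<open>Riemann sphere = complex option (None = infinity).  Limit set = closure of the orbit of
  the base point in the compactified upper half-space, intersected with the sphere at infinity:
  a finite point xi is a limit point iff (xi,0) lies in the Euclidean closure of the orbit;
  infinity is a limit point iff the orbit is unbounded.\<close>
definition limit_set :: "cmat set \<Rightarrow> complex option set" where
  "limit_set G =
     {Some \<xi> | \<xi>. (\<xi>, 0) \<in> closure ((\<lambda>A. hyp_act A base_point) ` G)}
     \<union> (if bounded ((\<lambda>A. hyp_act A base_point) ` G) then {} else {None})"

definition domain_of_discontinuity :: "cmat set \<Rightarrow> complex option set" where
  "domain_of_discontinuity G = UNIV - limit_set G"

definition chabauty_conv :: "(nat \<Rightarrow> cmat set) \<Rightarrow> cmat set \<Rightarrow> bool" where
  "chabauty_conv Gs G \<longleftrightarrow>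
     (\<forall>\<psi> r A. (\<forall>n. \<psi> n \<in> Gs n) \<and> strict_mono r \<and> (\<psi> \<circ> r) \<longlonglongrightarrow> A \<longrightarrow> A \<in> G) \<and>
     (\<forall>A\<in>G. \<exists>\<psi>. (\<forall>n. \<psi> n \<in> Gs n) \<and> \<psi> \<longlonglongrightarrow> A)"

text \<open>A path in the space of Kleinian groups with the geometric topology (sequential
  continuity; the Chabauty topology is metrizable).\<close>
definition geom_path :: "(real \<Rightarrow> cmat set) \<Rightarrow> bool" where
  "geom_path \<gamma> \<longleftrightarrow> (\<forall>t\<in>{0..1}. kleinian (\<gamma> t)) \<and>
     (\<forall>t\<in>{0..1}. \<forall>s. (\<forall>n. s n \<in> {0..1}) \<and> s \<longlonglongrightarrow> t \<longrightarrow> chabauty_conv (\<gamma> \<circ> s) (\<gamma> t))"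

end

theory Submission
  imports Defs
begin


definition mk :: "complex \<Rightarrow> complex \<Rightarrow> complex \<Rightarrow> complex \<Rightarrow> cmat" where
  "mk a b c d = vector [vector [a,b], vector [c,d]]"

lemma mk_nth[simp]: "mk a b c d $1$1 = a" "mk a b c d $1$2 = b" "mk a b c d $2$1 = c" "mk a b c d $2$2 = d"
  by (simp_all add: mk_def)

lemma mat_eq2: "(A::cmat) = B \<longleftrightarrow> A$1$1 = B$1$1 \<and> A$1$2 = B$1$2 \<and> A$2$1 = B$2$1 \<and> A$2$2 = B$2$2"
  by (auto simp: vec_eq_iff forall_2)

lemma mk_eta: "(A::cmat) = mk (A$1$1) (A$1$2) (A$2$1) (A$2$2)"
  by (simp add: mat_eq2)

lemma mult_nth[simp]:
  "((A::cmat) ** B)$1$1 = A$1$1*B$1$1 + A$1$2*B$2$1"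
  "((A::cmat) ** B)$1$2 = A$1$1*B$1$2 + A$1$2*B$2$2"
  "((A::cmat) ** B)$2$1 = A$2$1*B$1$1 + A$2$2*B$2$1"
  "((A::cmat) ** B)$2$2 = A$2$1*B$1$2 + A$2$2*B$2$2"
  by (simp_all add: matrix_matrix_mult_def sum_2)

lemma mat1_nth[simp]: "(mat 1::cmat)$1$1 = 1" "(mat 1::cmat)$1$2 = 0" "(mat 1::cmat)$2$1 = 0" "(mat 1::cmat)$2$2 = 1"
  by (simp_all add: mat_def)

lemma det2: "det (A::cmat) = A$1$1 * A$2$2 - A$1$2 * A$2$1"
  by (rule det_2)

definition adj2 :: "cmat \<Rightarrow> cmat" where
  "adj2 A = mk (A$2$2) (- A$1$2) (- A$2$1) (A$1$1)"

lemma adj2_nth[simp]: "adj2 A $1$1 = A$2$2" "adj2 A $1$2 = - A$1$2" "adj2 A $2$1 = - A$2$1" "adj2 A $2$2 = A$1$1"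
  by (simp_all add: adj2_def)

lemma adj2_right: "det A = 1 \<Longrightarrow> A ** adj2 A = mat 1"
  by (simp add: mat_eq2 det2 algebra_simps)
lemma adj2_left: "det A = 1 \<Longrightarrow> adj2 A ** A = mat 1"
  by (simp add: mat_eq2 det2 algebra_simps)

lemma matrix_inv_adj2: assumes "det A = 1" shows "matrix_inv A = adj2 A"
proof -
  have ex: "\<exists>A'. A ** A' = mat 1 \<and> A' ** A = mat 1" using adj2_right[OF assms] adj2_left[OF assms] by blast
  then have h: "A ** matrix_inv A = mat 1 \<and> matrix_inv A ** A = mat 1"
    unfolding matrix_inv_def by (rule someI_ex)
  have "matrix_inv A = matrix_inv A ** (A ** adj2 A)" using adj2_right[OF assms] by simp
  also have "\<dots> = (matrix_inv A ** A) ** adj2 A" by (simp add: matrix_mul_assoc)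
  also have "\<dots> = adj2 A" using h by simp
  finally show ?thesis .
qed

definition sm :: "complex \<Rightarrow> cmat \<Rightarrow> cmat" where "sm k A = (\<chi> i j. k * A$i$j)"
lemma sm_nth[simp]: "(sm k A)$i$j = k * A$i$j" by (simp add: sm_def)

lemma mult_sm_r: "(A::cmat) ** (sm k B) = sm k (A ** B)"
  by (simp add: mat_eq2 algebra_simps)
lemma mult_sm_l: "(sm k A) ** B = sm k (A ** B)"
  by (simp add: mat_eq2 algebra_simps)
lemma sm_sm: "sm a (sm b A) = sm (a*b) A" by (simp add: mat_eq2)
lemma sm_1[simp]: "sm 1 A = A" by (simp add: mat_eq2)
lemma adj2_left_gen: "adj2 C ** C = sm (det C) (mat 1)"
  by (simp add: mat_eq2 det2 algebra_simps)
lemma adj2_right_gen: "C ** adj2 C = sm (det C) (mat 1)"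
  by (simp add: mat_eq2 det2 algebra_simps)
lemma sm_mat1_mult: "(sm k (mat 1)) ** (A::cmat) = sm k A"
  by (simp add: mat_eq2)

definition cj :: "cmat \<Rightarrow> cmat \<Rightarrow> cmat" where
  "cj C g = sm (inverse (det C)) (C ** g ** adj2 C)"

lemma cj_mult: "det C \<noteq> 0 \<Longrightarrow> cj C g ** cj C h = cj C (g ** h)"
proof -
  assume k: "det C \<noteq> 0"
  have "cj C g ** cj C h = sm (inverse (det C) * inverse (det C)) (C ** g ** (adj2 C ** C) ** h ** adj2 C)"
    by (simp add: cj_def mult_sm_r mult_sm_l matrix_mul_assoc sm_sm)
  also have "\<dots> = sm (inverse (det C) * inverse (det C) * det C) (C ** g ** h ** adj2 C)"
    by (simp add: adj2_left_gen mult_sm_r mult_sm_l matrix_mul_assoc sm_sm sm_mat1_mult)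
  also have "\<dots> = cj C (g ** h)" using k by (simp add: cj_def matrix_mul_assoc field_simps)
  finally show ?thesis .
qed

lemma neg_nth[simp]: "(- (A::cmat))$i$j = - (A$i$j)" by simp

lemma det_sm: "det (sm k A) = k*k * det A" by (simp add: det2 algebra_simps)
lemma det_adj2: "det (adj2 A) = det A" by (simp add: det2 algebra_simps)
lemma adj2_mult: "adj2 (A ** B) = adj2 B ** adj2 A" by (simp add: mat_eq2 algebra_simps)
lemma adj2_sm: "adj2 (sm k A) = sm k (adj2 A)" by (simp add: mat_eq2)
lemma adj2_adj2[simp]: "adj2 (adj2 A) = A" by (simp add: mat_eq2)
lemma adj2_mat1[simp]: "adj2 (mat 1) = mat 1" by (simp add: mat_eq2)

lemma det_cj: "det C \<noteq> 0 \<Longrightarrow> det (cj C g) = det g"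
  by (simp add: cj_def det_sm det_mul det_adj2 field_simps)

lemma cj_mat1[simp]: "det C \<noteq> 0 \<Longrightarrow> cj C (mat 1) = mat 1"
  by (simp add: cj_def adj2_right_gen mat_eq2)

lemma cj_neg: "cj C (- A) = - cj C A"
  by (simp add: cj_def mat_eq2 algebra_simps)

lemma cj_id[simp]: "cj (mat 1) g = g"
  by (simp add: cj_def)

lemma cj_comp: "det C1 \<noteq> 0 \<Longrightarrow> det C2 \<noteq> 0 \<Longrightarrow> cj (C1 ** C2) g = cj C1 (cj C2 g)"
  by (simp add: cj_def det_mul adj2_mult mult_sm_r mult_sm_l matrix_mul_assoc sm_sm mult.commute)

lemma cj_inv[simp]: "det C \<noteq> 0 \<Longrightarrow> cj (adj2 C) (cj C g) = g"
proof -
  assume k: "det C \<noteq> 0"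
  have "cj (adj2 C) (cj C g) = cj (adj2 C ** C) g" using k by (simp add: cj_comp det_adj2)
  also have "\<dots> = sm (inverse (det C * det C)) (sm (det C) (mat 1) ** g ** sm (det C) (mat 1))"
    by (simp add: cj_def adj2_left_gen det_sm adj2_sm)
  also have "\<dots> = g" using k by (simp add: sm_mat1_mult mult_sm_r sm_sm field_simps)
  finally show ?thesis .
qed

lemma cj_inv2[simp]: "det C \<noteq> 0 \<Longrightarrow> cj C (cj (adj2 C) g) = g"
  using cj_inv[of "adj2 C" g] by (simp add: det_adj2)

lemma adj2_cj: "adj2 (cj C g) = cj C (adj2 g)"
  by (simp add: cj_def adj2_sm adj2_mult matrix_mul_assoc)

lemma mpow_Suc: "mpow A (Suc n) = A ** mpow A n" by (simp add: mpow_def)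
lemma mpow_0: "mpow A 0 = mat 1" by (simp add: mpow_def)

lemma mpow_cj: "det C \<noteq> 0 \<Longrightarrow> mpow (cj C g) n = cj C (mpow g n)"
  by (induction n) (simp_all add: mpow_Suc mpow_0 cj_mult)

lemma cj_pm_one: "det C \<noteq> 0 \<Longrightarrow> x \<in> pm_one \<Longrightarrow> cj C x = x"
  by (auto simp: pm_one_def cj_neg)

lemma cj_in_pm_one: "det C \<noteq> 0 \<Longrightarrow> cj C x \<in> pm_one \<longleftrightarrow> x \<in> pm_one"
  by (metis cj_inv cj_pm_one det_adj2)

lemma tendsto_mat_entries:
  assumes "(f \<longlongrightarrow> (A::cmat)) F" shows "((\<lambda>n. f n $ i $ j) \<longlongrightarrow> A $ i $ j) F"
  using assms by (intro tendsto_vec_nth)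

lemma tendsto_matI:
  assumes "\<And>i j. ((\<lambda>n. f n $ i $ j) \<longlongrightarrow> (A::cmat) $ i $ j) F" shows "(f \<longlongrightarrow> A) F"
  by (rule vec_tendstoI, rule vec_tendstoI, rule assms)

lemma tendsto_cj:
  assumes C: "(Cf \<longlongrightarrow> C0) F" and g: "(gf \<longlongrightarrow> g0) F" and d: "det C0 \<noteq> 0"
  shows "((\<lambda>n. cj (Cf n) (gf n)) \<longlongrightarrow> cj C0 g0) F"
proof (rule tendsto_matI)
  fix i j :: 2
  have Ce: "\<And>i j. ((\<lambda>n. Cf n $ i $ j) \<longlongrightarrow> C0 $ i $ j) F" by (rule tendsto_mat_entries[OF C])
  have ge: "\<And>i j. ((\<lambda>n. gf n $ i $ j) \<longlongrightarrow> g0 $ i $ j) F" by (rule tendsto_mat_entries[OF g])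
  have dd: "((\<lambda>n. det (Cf n)) \<longlongrightarrow> det C0) F" unfolding det2 by (intro tendsto_intros Ce)
  have di: "((\<lambda>n. inverse (det (Cf n))) \<longlongrightarrow> inverse (det C0)) F" by (intro tendsto_intros dd d)
  show "((\<lambda>n. cj (Cf n) (gf n) $ i $ j) \<longlongrightarrow> cj C0 g0 $ i $ j) F"
  proof -
    have e: " ((\<lambda>n. cj (Cf n) (gf n) $ i $ j) \<longlongrightarrow> cj C0 g0 $ i $ j) F"
      if "i = 1 \<or> i = 2" "j = 1 \<or> j = 2" for i j :: 2
      using that unfolding cj_def sm_nth
      apply (elim disjE; hypsubst)
      apply (simp only: mult_nth adj2_nth; intro tendsto_mult tendsto_add tendsto_diff tendsto_minus Ce ge di)+
      done
    show ?thesis using e exhaust_2 by blast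
  qed
qed

lemma kleinian_cj:
  assumes d: "det C \<noteq> 0" and K: "kleinian G"
  shows "kleinian (cj C ` G)"
proof -
  from K have ps: "psl_subgroup G" and nl: "\<forall>A. \<not> A islimpt G"
    and tf: "\<forall>A\<in>G. \<forall>n>0. mpow A n \<in> pm_one \<longrightarrow> A \<in> pm_one"
    by (auto simp: kleinian_def)
  from ps have sl: "G \<subseteq> SL2C" and pm: "pm_one \<subseteq> G" and mu: "\<forall>A\<in>G. \<forall>B\<in>G. A ** B \<in> G"
    and iv: "\<forall>A\<in>G. matrix_inv A \<in> G" by (auto simp: psl_subgroup_def)
  have "psl_subgroup (cj C ` G)"
    unfolding psl_subgroup_def
  proof (intro conjI ballI subsetI)
    fix x assume "x \<in> cj C ` G" then show "x \<in> SL2C" using sl d by (auto simp: SL2C_def det_cj)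
  next
    fix x assume "x \<in> pm_one" then show "x \<in> cj C ` G" using pm d cj_pm_one
      by (metis image_eqI subsetD)
  next
    fix A B assume "A \<in> cj C ` G" "B \<in> cj C ` G" then show "A ** B \<in> cj C ` G"
      using mu d by (auto simp: cj_mult)
  next
    fix A assume "A \<in> cj C ` G"
    then obtain g where g: "g \<in> G" "A = cj C g" by auto
    have dg: "det g = 1" using g sl by (auto simp: SL2C_def)
    have "matrix_inv A = cj C (matrix_inv g)"
      using g dg d by (simp add: matrix_inv_adj2 det_cj adj2_cj)
    then show "matrix_inv A \<in> cj C ` G" using iv g by auto
  qed
  moreover have "\<forall>A. \<not> A islimpt (cj C ` G)"
  proof (intro allI notI)
    fix A assume "A islimpt (cj C ` G)"
    then obtain f where f: "\<And>n. f n \<in> cj C ` G - {A}" "f \<longlonglongrightarrow> A"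
      unfolding islimpt_sequential by blast
    let ?h = "\<lambda>n. cj (adj2 C) (f n)"
    have "\<And>n. ?h n \<in> G - {cj (adj2 C) A}"
    proof -
      fix n
      from f(1)[of n] obtain g where g: "g \<in> G" "f n = cj C g" "f n \<noteq> A" by auto
      have "?h n = g" using g d by simp
      moreover have "g \<noteq> cj (adj2 C) A" using g d by auto
      ultimately show "?h n \<in> G - {cj (adj2 C) A}" using g by simp
    qed
    moreover have "?h \<longlonglongrightarrow> cj (adj2 C) A"
      by (rule tendsto_cj[OF tendsto_const f(2)]) (simp add: det_adj2 d)
    ultimately have "cj (adj2 C) A islimpt G" unfolding islimpt_sequential by (intro exI[of _ ?h]) blast
    then show False using nl by blast
  qed
  moreover have "\<forall>A\<in>cj C ` G. \<forall>n>0. mpow A n \<in> pm_one \<longrightarrow> A \<in> pm_one"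
    using tf d by (auto simp: mpow_cj cj_in_pm_one)
  ultimately show ?thesis by (simp add: kleinian_def)
qed

lemma norm_vec_le_sum: "norm (x::'a::real_normed_vector^'n) \<le> (\<Sum>i\<in>UNIV. norm (x$i))"
  unfolding norm_vec_def by (rule L2_set_le_sum) simp

lemma norm_cmat_le: "norm (x::cmat) \<le> cmod (x$1$1) + cmod (x$1$2) + cmod (x$2$1) + cmod (x$2$2)"
proof -
  have "norm x \<le> norm (x$1) + norm (x$2)" using norm_vec_le_sum[of x] by (simp add: sum_2)
  also have "norm (x$1) \<le> cmod (x$1$1) + cmod (x$1$2)" using norm_vec_le_sum[of "x$1"] by (simp add: sum_2)
  also have "norm (x$2) \<le> cmod (x$2$1) + cmod (x$2$2)" using norm_vec_le_sum[of "x$2"] by (simp add: sum_2)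
  finally show ?thesis by simp
qed

lemma kl_closed: "kleinian G \<Longrightarrow> closed G"
  by (auto simp: kleinian_def closed_limpt)

lemma kl_finite_bounded:
  assumes "kleinian G" shows "finite {x\<in>G. \<forall>i j. cmod (x$i$j) \<le> K}"
proof (rule ccontr)
  let ?S = "{x\<in>G. \<forall>i j. cmod (x$i$j) \<le> K}"
  assume inf: "infinite ?S"
  have "bounded ?S"
    unfolding bounded_iff
  proof (intro exI ballI)
    fix x assume "x \<in> ?S"
    then have "cmod (x$1$1) \<le> K" "cmod (x$1$2) \<le> K" "cmod (x$2$1) \<le> K" "cmod (x$2$2) \<le> K" by auto
    then show "norm x \<le> 4*K" using norm_cmat_le[of x] by linarith
  qed
  then obtain x where "x islimpt ?S" using inf bounded_infinite_imp_islimpt[of ?S ?S] by blast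
  then have "x islimpt G" by (rule islimpt_subset) auto
  then show False using assms by (auto simp: kleinian_def)
qed

lemma kl_mult: "kleinian G \<Longrightarrow> A \<in> G \<Longrightarrow> B \<in> G \<Longrightarrow> A ** B \<in> G"
  by (auto simp: kleinian_def psl_subgroup_def)
lemma kl_det: "kleinian G \<Longrightarrow> A \<in> G \<Longrightarrow> det A = 1"
  by (auto simp: kleinian_def psl_subgroup_def SL2C_def)
lemma kl_adj: "kleinian G \<Longrightarrow> A \<in> G \<Longrightarrow> adj2 A \<in> G"
  by (metis kl_det matrix_inv_adj2 kleinian_def psl_subgroup_def)
lemma kl_one: "kleinian G \<Longrightarrow> mat 1 \<in> G"
  by (auto simp: kleinian_def psl_subgroup_def pm_one_def)
lemma kl_pm: "kleinian G \<Longrightarrow> pm_one \<subseteq> G"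
  by (auto simp: kleinian_def psl_subgroup_def)
lemma kl_mpow: "kleinian G \<Longrightarrow> A \<in> G \<Longrightarrow> mpow A n \<in> G"
  by (induction n) (auto simp: mpow_0 mpow_Suc kl_one kl_mult)

lemma mpow_add: "mpow A (m + n) = mpow A m ** mpow A n"
  by (induction m) (simp_all add: mpow_0 mpow_Suc matrix_mul_assoc)

definition Bnd :: "cmat set \<Rightarrow> real \<Rightarrow> bool" where
  "Bnd G R \<longleftrightarrow> (\<forall>g\<in>G. 1 \<le> R*((cmod(g$2$1))\<^sup>2 + (cmod(g$2$2))\<^sup>2) \<and>
      cmod(g$1$1 * cnj(g$2$1) + g$1$2*cnj(g$2$2)) \<le> R*((cmod(g$2$1))\<^sup>2 + (cmod(g$2$2))\<^sup>2))"

lemma sq_le_imp_le_max: "(x::real) \<ge> 0 \<Longrightarrow> x\<^sup>2 \<le> R \<Longrightarrow> x \<le> max 1 R"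
proof (cases "x \<le> 1")
  case False
  assume "x\<^sup>2 \<le> R"
  have "x * 1 \<le> x * x" using False by (intro mult_left_mono) auto
  then show ?thesis using \<open>x\<^sup>2 \<le> R\<close> by (simp add: power2_eq_square)
qed simp

lemma upper_bounded:
  assumes K: "kleinian G" and B: "Bnd G R" and u: "u \<in> G" and u21: "u$2$1 = 0"
  shows "\<forall>i j. cmod (u$i$j) \<le> (max 1 R)\<^sup>2"
proof -
  let ?M = "max 1 R"
  have du: "u$1$1 * u$2$2 = 1" using kl_det[OF K u] u21 by (simp add: det2)
  have au: "adj2 u \<in> G" using kl_adj[OF K u] .
  have b1: "1 \<le> R * (cmod (u$2$2))\<^sup>2" and b2: "cmod (u$1$2) * cmod (u$2$2) \<le> R * (cmod (u$2$2))\<^sup>2"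
    using B u u21 unfolding Bnd_def by (auto simp: norm_mult)
  have b3: "1 \<le> R * (cmod (u$1$1))\<^sup>2" using B au u21 unfolding Bnd_def by auto
  have m: "cmod (u$1$1) * cmod (u$2$2) = 1" using du by (metis norm_mult norm_one)
  have p22: "cmod (u$2$2) > 0" using m by (cases "cmod (u$2$2) = 0") auto
  have Rp: "R > 0"
  proof (rule ccontr)
    assume "\<not> R > 0"
    then have "R * (cmod (u$2$2))\<^sup>2 \<le> 0" by (intro mult_nonpos_nonneg) auto
    then show False using b1 by simp
  qed
  have "(cmod (u$2$2))\<^sup>2 \<le> R"
  proof -
    have "(cmod (u$2$2))\<^sup>2 * (cmod (u$1$1))\<^sup>2 = 1" using m by (simp add: power_mult_distrib[symmetric] mult.commute)
    moreover have "(cmod (u$2$2))\<^sup>2 * 1 \<le> (cmod (u$2$2))\<^sup>2 * (R * (cmod (u$1$1))\<^sup>2)"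
      using b3 by (intro mult_left_mono) auto
    ultimately show ?thesis by (simp add: algebra_simps)
  qed
  then have e22: "cmod (u$2$2) \<le> ?M" by (intro sq_le_imp_le_max) auto
  have "(cmod (u$1$1))\<^sup>2 \<le> R"
  proof -
    have "(cmod (u$1$1))\<^sup>2 * (cmod (u$2$2))\<^sup>2 = 1" using m by (simp add: power_mult_distrib[symmetric])
    moreover have "(cmod (u$1$1))\<^sup>2 * 1 \<le> (cmod (u$1$1))\<^sup>2 * (R * (cmod (u$2$2))\<^sup>2)"
      using b1 by (intro mult_left_mono) auto
    ultimately show ?thesis by (simp add: algebra_simps)
  qed
  then have e11: "cmod (u$1$1) \<le> ?M" by (intro sq_le_imp_le_max) auto
  have e12: "cmod (u$1$2) \<le> R * cmod (u$2$2)"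
  proof -
    have "cmod (u$1$2) * cmod (u$2$2) \<le> (R * cmod (u$2$2)) * cmod (u$2$2)"
      using b2 by (simp add: power2_eq_square mult.assoc)
    then show ?thesis using p22 by simp
  qed
  have M1: "?M \<ge> 1" by simp
  have "?M * 1 \<le> ?M * ?M" using M1 by (intro mult_left_mono) auto
  then have "?M \<le> ?M\<^sup>2" by (simp add: power2_eq_square)
  moreover have "R * cmod (u$2$2) \<le> ?M * ?M" using e22 Rp by (intro mult_mono) auto
  ultimately have "?M \<le> ?M * ?M" "R * cmod (u$2$2) \<le> ?M * ?M" by (simp_all add: power2_eq_square)
  moreover have "1 \<le> ?M" "R \<le> ?M" by auto
  ultimately have "1 \<le> ?M * ?M" "R \<le> ?M * ?M" "cmod (u$1$2) \<le> ?M * ?M" using e12 by linarith+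
  moreover have "cmod (u$1$1) \<le> ?M * ?M" "cmod (u$2$2) \<le> ?M * ?M"
    using e11 e22 \<open>?M \<le> ?M * ?M\<close> by linarith+
  ultimately show ?thesis using u21
    by (auto simp: forall_2 power2_eq_square)
qed

lemma triangular_trivial:
  assumes K: "kleinian G" and B: "Bnd G R" and v: "v \<in> G" and v21: "v$2$1 = 0"
  shows "v \<in> pm_one"
proof -
  let ?K = "(max 1 R)\<^sup>2"
  have up: "mpow v k $2$1 = 0" for k
    by (induction k) (simp_all add: mpow_0 mpow_Suc v21)
  have "range (mpow v) \<subseteq> {x\<in>G. \<forall>i j. cmod (x$i$j) \<le> ?K}"
    using upper_bounded[OF K B kl_mpow[OF K v] up] kl_mpow[OF K v] by auto
  then have "finite (range (mpow v))" using kl_finite_bounded[OF K] finite_subset by blast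
  then have "\<not> inj (mpow v)" using finite_imageD infinite_UNIV_nat by blast
  then obtain i j where ij: "i \<noteq> j" "mpow v i = mpow v j" unfolding inj_def by blast
  obtain a b where ab: "a < b" "mpow v a = mpow v b" using ij by (metis linorder_neqE_nat)
  have "mpow v b = mpow v a ** mpow v (b - a)" using ab mpow_add[of v a "b-a"] by simp
  then have "adj2 (mpow v a) ** mpow v a = adj2 (mpow v a) ** (mpow v a ** mpow v (b - a))" using ab by simp
  moreover have "adj2 (mpow v a) ** mpow v a = mat 1" using adj2_left kl_det[OF K kl_mpow[OF K v]] by blast
  ultimately have "mpow v (b - a) = mat 1" by (metis matrix_mul_assoc matrix_mul_lid)
  then have "mpow v (b - a) \<in> pm_one" by (simp add: pm_one_def)
  moreover have "b - a > 0" using ab by simp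
  ultimately show ?thesis using K v unfolding kleinian_def by blast
qed

definition Dm :: "real \<Rightarrow> cmat" where "Dm m = mk (of_real m) 0 0 1"

lemma det_Dm: "det (Dm m) = of_real m" by (simp add: Dm_def det2)

lemma cj_Dm_nth: assumes "m \<noteq> 0"
  shows "cj (Dm m) g $1$1 = g$1$1" "cj (Dm m) g $1$2 = of_real m * g$1$2"
        "cj (Dm m) g $2$1 = g$2$1 / of_real m" "cj (Dm m) g $2$2 = g$2$2"
  using assms by (simp_all add: cj_def Dm_def det2 field_simps)

lemma tendsto_mmult:
  fixes Af Bf :: "'x \<Rightarrow> cmat"
  assumes A: "(Af \<longlongrightarrow> A0) F" and B: "(Bf \<longlongrightarrow> B0) F"
  shows "((\<lambda>n. Af n ** Bf n :: cmat) \<longlongrightarrow> A0 ** B0) F"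
proof (rule tendsto_matI)
  fix i j :: 2
  have Ae: "\<And>i j. ((\<lambda>n. Af n $ i $ j) \<longlongrightarrow> A0 $ i $ j) F" by (rule tendsto_mat_entries[OF A])
  have Be: "\<And>i j. ((\<lambda>n. Bf n $ i $ j) \<longlongrightarrow> B0 $ i $ j) F" by (rule tendsto_mat_entries[OF B])
  have e: "((\<lambda>n. (Af n ** Bf n) $ i $ j) \<longlongrightarrow> (A0 ** B0) $ i $ j) F"
    if "i = 1 \<or> i = 2" "j = 1 \<or> j = 2" for i j :: 2
    using that
    apply (elim disjE; hypsubst)
    apply (simp only: mult_nth; intro tendsto_mult tendsto_add Ae Be)+
    done
  show "((\<lambda>n. (Af n ** Bf n) $ i $ j) \<longlongrightarrow> (A0 ** B0) $ i $ j) F" using e exhaust_2 by blast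
qed

lemma tendsto_adj2:
  fixes Af :: "'x \<Rightarrow> cmat"
  assumes A: "(Af \<longlongrightarrow> A0) F"
  shows "((\<lambda>n. adj2 (Af n)) \<longlongrightarrow> adj2 A0) F"
proof (rule tendsto_matI)
  fix i j :: 2
  have Ae: "\<And>i j. ((\<lambda>n. Af n $ i $ j) \<longlongrightarrow> A0 $ i $ j) F" by (rule tendsto_mat_entries[OF A])
  have e: "((\<lambda>n. adj2 (Af n) $ i $ j) \<longlongrightarrow> adj2 A0 $ i $ j) F"
    if "i = 1 \<or> i = 2" "j = 1 \<or> j = 2" for i j :: 2
    using that
    apply (elim disjE; hypsubst)
    apply (simp only: adj2_nth; intro tendsto_minus Ae)+
    done
  show "((\<lambda>n. adj2 (Af n) $ i $ j) \<longlongrightarrow> adj2 A0 $ i $ j) F" using e exhaust_2 by blast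
qed

lemma tendsto_Dm:
  assumes "(f \<longlongrightarrow> m) F" shows "((\<lambda>n. Dm (f n)) \<longlongrightarrow> Dm m) F"
proof (rule tendsto_matI)
  fix i j :: 2
  have e: "((\<lambda>n. Dm (f n) $ i $ j) \<longlongrightarrow> Dm m $ i $ j) F"
    if "i = 1 \<or> i = 2" "j = 1 \<or> j = 2" for i j :: 2
    using that assms
    by (elim disjE; hypsubst; simp add: Dm_def; intro tendsto_of_real assms)
  show "((\<lambda>n. Dm (f n) $ i $ j) \<longlongrightarrow> Dm m $ i $ j) F" using e exhaust_2 by blast
qed

lemma kleinian_pm_one: "kleinian pm_one"
proof -
  have d1: "det (mat 1 :: cmat) = 1" "det (- mat 1 :: cmat) = 1" by (simp_all add: det2)
  have a1: "adj2 (- mat 1) = - mat 1" by (simp add: mat_eq2)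
  have "psl_subgroup pm_one"
    unfolding psl_subgroup_def
    using d1 by (auto simp: pm_one_def SL2C_def matrix_inv_adj2 a1 mat_eq2)
  moreover have "\<forall>A. \<not> A islimpt pm_one" by (simp add: islimpt_finite pm_one_def)
  ultimately show ?thesis by (simp add: kleinian_def)
qed

lemma real_qbound:
  fixes R Bb ca cb cc cd X :: real
  assumes R: "R \<ge> 1" and Bb: "Bb > 0" and ca: "0 \<le> ca" "ca \<le> Bb" and cd: "0 \<le> cd" "cd \<le> Bb"
    and cb: "0 \<le> cb" and cc: "0 \<le> cc" "cc < 1/(2*R)"
    and b1: "1 \<le> R*(cc\<^sup>2+cd\<^sup>2)" and b2: "X \<le> R*(cc\<^sup>2+cd\<^sup>2)" and tri: "cb*cd \<le> X + ca*cc"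
  shows "cb \<le> max 1 (2*R*(R*(1+Bb\<^sup>2)+Bb)\<^sup>2)"
proof -
  define K1 where "K1 = R*(1+Bb\<^sup>2)+Bb"
  have "1/(2*R) \<le> 1/2" using R by (simp add: field_simps)
  then have cc1: "cc \<le> 1" using cc by linarith
  have "cc * cc \<le> cc * 1" using cc cc1 by (intro mult_left_mono) auto
  then have cc2: "cc\<^sup>2 \<le> cc" by (simp add: power2_eq_square)
  have "R * cc < R * (1/(2*R))" using cc R by (intro mult_strict_left_mono) auto
  then have "R * cc < 1/2" using R by simp
  moreover have "R * cc\<^sup>2 \<le> R * cc" using cc2 R by (intro mult_left_mono) auto
  ultimately have d2: "R * cd\<^sup>2 > 1/2" using b1 by (simp add: algebra_simps)
  have "cc\<^sup>2 \<le> 1" using cc2 cc1 by linarith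
  moreover have "cd\<^sup>2 \<le> Bb\<^sup>2" using cd by (intro power_mono) auto
  ultimately have "R*(cc\<^sup>2+cd\<^sup>2) \<le> R*(1+Bb\<^sup>2)" using R by (intro mult_left_mono) auto
  moreover have "ca*cc \<le> Bb*1" using ca cc cc1 by (intro mult_mono) auto
  ultimately have "cb*cd \<le> K1" using b2 tri unfolding K1_def by linarith
  then have "(cb*cd)\<^sup>2 \<le> K1\<^sup>2" using cb cd by (intro power_mono) auto
  then have e: "cb\<^sup>2 * cd\<^sup>2 \<le> K1\<^sup>2" by (simp add: power_mult_distrib)
  have "cb\<^sup>2 * (1/2) \<le> cb\<^sup>2 * (R*cd\<^sup>2)" using d2 by (intro mult_left_mono) auto
  also have "\<dots> = R * (cb\<^sup>2 * cd\<^sup>2)" by simp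
  also have "\<dots> \<le> R * K1\<^sup>2" using e R by (intro mult_left_mono) auto
  finally have "cb\<^sup>2 \<le> 2*R*K1\<^sup>2" by simp
  then show ?thesis unfolding K1_def by (intro sq_le_imp_le_max cb)
qed



lemma main_path:
  fixes Rp :: "real \<Rightarrow> cmat"
  assumes K: "kleinian \<Gamma>"
    and Rc: "\<And>x. isCont Rp x"
    and R0: "Rp 0 = mat 1"
    and Rd: "\<And>r. 0 \<le> r \<Longrightarrow> r \<le> 1 \<Longrightarrow> det (Rp r) \<noteq> 0"
    and B: "Bnd (cj (Rp 1) ` \<Gamma>) R"
  shows "\<exists>\<gamma>. geom_path \<gamma> \<and> \<gamma> 0 = \<Gamma> \<and> \<gamma> 1 = pm_one"
proof -
  define mu where "mu t = min 1 (2 - 2*t)" for t::real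
  define rho where "rho t = min 1 (2*t)" for t::real
  define C where "C t = Dm (mu t) ** Rp (rho t)" for t
  define \<gamma> where "\<gamma> t = (if t < 1 then cj (C t) ` \<Gamma> else pm_one)" for t
  have mupos: "0 < mu t" if "t < 1" for t using that by (simp add: mu_def)
  have Cdet: "det (C t) \<noteq> 0" if "0 \<le> t" "t < 1" for t
  proof -
    have "det (Rp (rho t)) \<noteq> 0" using that by (intro Rd) (auto simp: rho_def)
    moreover have "mu t \<noteq> 0" using mupos[OF that(2)] by simp
    ultimately show ?thesis by (simp add: C_def det_mul det_Dm)
  qed
  have mucont: "((\<lambda>n. mu (s n)) \<longlongrightarrow> mu t) F" if "(s \<longlongrightarrow> t) F" for s t and F :: "'z filter"
    unfolding mu_def by (intro tendsto_intros that)
  have Ctend: "((\<lambda>n. C (s n)) \<longlongrightarrow> C t) F" if "(s \<longlongrightarrow> t) F" for s t and F :: "'z filter"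
  proof -
    have "((\<lambda>n. rho (s n)) \<longlongrightarrow> rho t) F" unfolding rho_def by (intro tendsto_intros that)
    then have "((\<lambda>n. Rp (rho (s n))) \<longlongrightarrow> Rp (rho t)) F" by (rule isCont_tendsto_compose[OF Rc])
    then show ?thesis unfolding C_def by (intro tendsto_mmult tendsto_Dm mucont that)
  qed
  have C0: "C 0 = mat 1" by (simp add: C_def mu_def rho_def R0 Dm_def mat_eq2)
  have Chalf: "C t = Dm (mu t) ** Rp 1" if "1/2 \<le> t" for t
    using that by (simp add: C_def rho_def)
  let ?G' = "cj (Rp 1) ` \<Gamma>"
  have d1: "det (Rp 1) \<noteq> 0" by (rule Rd) auto
  have K': "kleinian ?G'" by (rule kleinian_cj[OF d1 K])
  have kl: "kleinian (\<gamma> t)" if "t \<in> {0..1}" for t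
    using that Cdet kleinian_cj[OF _ K] kleinian_pm_one by (auto simp: \<gamma>_def)
  have g0: "\<gamma> 0 = \<Gamma>" by (simp add: \<gamma>_def C0)
  have g1: "\<gamma> 1 = pm_one" by (simp add: \<gamma>_def)
  have cont: "chabauty_conv (\<gamma> \<circ> s) (\<gamma> t)"
    if t: "t \<in> {0..1}" and s: "\<forall>n. s n \<in> {0..1}" "s \<longlonglongrightarrow> t" for t s
  proof (cases "t < 1")
    case True
    have ev1: "\<forall>\<^sub>F n in sequentially. s n < 1" using order_tendstoD(2)[OF s(2) True] .
    have dt: "det (C t) \<noteq> 0" using Cdet t True by auto
    show ?thesis unfolding chabauty_conv_def
    proof (intro conjI allI impI ballI)
      fix \<psi> r A
      assume H: "(\<forall>n. \<psi> n \<in> (\<gamma> \<circ> s) n) \<and> strict_mono r \<and> (\<psi> \<circ> r) \<longlonglongrightarrow> A"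
      then have mem: "\<And>n. \<psi> n \<in> \<gamma> (s n)" and r: "strict_mono r" and lim: "(\<lambda>n. \<psi> (r n)) \<longlonglongrightarrow> A"
        by (auto simp: o_def)
      have sr: "(\<lambda>n. s (r n)) \<longlonglongrightarrow> t" using LIMSEQ_subseq_LIMSEQ[OF s(2) r] by (simp add: o_def)
      have ev2: "\<forall>\<^sub>F n in sequentially. s (r n) < 1" using order_tendstoD(2)[OF sr True] .
      define g where "g n = cj (adj2 (C (s (r n)))) (\<psi> (r n))" for n
      have evg: "\<forall>\<^sub>F n in sequentially. g n \<in> \<Gamma>"
        using ev2
      proof (rule eventually_mono)
        fix n assume "s (r n) < 1"
        then obtain x where x: "x \<in> \<Gamma>" "\<psi> (r n) = cj (C (s (r n))) x"
          using mem[of "r n"] by (auto simp: \<gamma>_def)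
        have "det (C (s (r n))) \<noteq> 0" using Cdet s(1) \<open>s (r n) < 1\<close> by auto
        then show "g n \<in> \<Gamma>" using x by (simp add: g_def)
      qed
      have gl: "g \<longlonglongrightarrow> cj (adj2 (C t)) A"
        unfolding g_def by (intro tendsto_cj tendsto_adj2 Ctend sr lim) (simp add: det_adj2 dt)
      have "cj (adj2 (C t)) A \<in> \<Gamma>"
        by (rule Lim_in_closed_set[OF kl_closed[OF K] evg _ gl]) simp
      moreover have "A = cj (C t) (cj (adj2 (C t)) A)" using dt by simp
      ultimately show "A \<in> \<gamma> t" using True by (auto simp: \<gamma>_def)
    next
      fix A assume "A \<in> \<gamma> t"
      then obtain x where x: "x \<in> \<Gamma>" "A = cj (C t) x" using True by (auto simp: \<gamma>_def)
      define \<psi> where "\<psi> n = (if s n < 1 then cj (C (s n)) x else mat 1)" for n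
      have "\<forall>n. \<psi> n \<in> (\<gamma> \<circ> s) n"
        using x by (auto simp: \<psi>_def \<gamma>_def pm_one_def)
      moreover have "\<psi> \<longlonglongrightarrow> A"
      proof (rule Lim_transform_eventually)
        show "(\<lambda>n. cj (C (s n)) x) \<longlonglongrightarrow> A" unfolding x(2)
          by (intro tendsto_cj Ctend s(2) tendsto_const dt)
        show "\<forall>\<^sub>F n in sequentially. cj (C (s n)) x = \<psi> n"
          using ev1 by (rule eventually_mono) (simp add: \<psi>_def)
      qed
      ultimately show "\<exists>\<psi>. (\<forall>n. \<psi> n \<in> (\<gamma> \<circ> s) n) \<and> \<psi> \<longlonglongrightarrow> A" by blast
    qed
  next
    case False
    then have t1: "t = 1" using t by auto
    show ?thesis unfolding chabauty_conv_def
    proof (intro conjI allI impI ballI)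
      fix \<psi> r A
      assume H: "(\<forall>n. \<psi> n \<in> (\<gamma> \<circ> s) n) \<and> strict_mono r \<and> (\<psi> \<circ> r) \<longlonglongrightarrow> A"
      then have mem: "\<And>n. \<psi> n \<in> \<gamma> (s n)" and r: "strict_mono r" and lim: "(\<lambda>n. \<psi> (r n)) \<longlonglongrightarrow> A"
        by (auto simp: o_def)
      define \<phi> where "\<phi> = (\<lambda>n. \<psi> (r n))"
      define \<sigma> where "\<sigma> = (\<lambda>n. s (r n))"
      have philim: "\<phi> \<longlonglongrightarrow> A" using lim by (simp add: \<phi>_def)
      have sig: "\<sigma> \<longlonglongrightarrow> 1" using LIMSEQ_subseq_LIMSEQ[OF s(2) r] t1 by (simp add: o_def \<sigma>_def)
      have phimem: "\<phi> n \<in> \<gamma> (\<sigma> n)" for n by (simp add: \<phi>_def \<sigma>_def mem)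
      have sig01: "0 \<le> \<sigma> n" "\<sigma> n \<le> 1" for n using s(1) by (auto simp: \<sigma>_def)
      show "A \<in> \<gamma> t"
      proof (rule ccontr)
        assume "A \<notin> \<gamma> t"
        then have nA: "A \<in> - pm_one" using t1 g1 by simp
        have "open (- pm_one)" by (simp add: pm_one_def finite_imp_closed open_Compl)
        then have E1: "\<forall>\<^sub>F n in sequentially. \<phi> n \<in> - pm_one"
          using topological_tendstoD[OF philim] nA by blast
        have E2: "\<forall>\<^sub>F n in sequentially. 1/2 < \<sigma> n" using order_tendstoD(1)[OF sig, of "1/2"] by simp
        obtain Bb where Bb: "Bb > 0" "\<And>n. norm (\<phi> n) \<le> Bb"
          using convergent_imp_Bseq[OF convergentI[OF philim]] by (auto simp: Bseq_def)
        have ent: "cmod (\<phi> n $ i $ j) \<le> Bb" for n i j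
          using order_trans[OF order_trans[OF Finite_Cartesian_Product.norm_nth_le Finite_Cartesian_Product.norm_nth_le] Bb(2)] by simp
        have "1 \<le> R * ((cmod ((mat 1::cmat)$2$1))\<^sup>2 + (cmod ((mat 1::cmat)$2$2))\<^sup>2)"
          using B kl_one[OF K'] unfolding Bnd_def by blast
        then have R1: "R \<ge> 1" by simp
        have mul: "(\<lambda>n. mu (\<sigma> n)) \<longlonglongrightarrow> 0" using mucont[OF sig] by (simp add: mu_def)
        have E3: "\<forall>\<^sub>F n in sequentially. mu (\<sigma> n) < 1/(2*R*Bb)"
          using order_tendstoD(2)[OF mul] R1 Bb by simp
        obtain N where N: "\<And>n. n \<ge> N \<Longrightarrow> \<phi> n \<in> - pm_one \<and> 1/2 < \<sigma> n \<and> mu (\<sigma> n) < 1/(2*R*Bb)"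
          using eventually_conj[OF E1 eventually_conj[OF E2 E3]] unfolding eventually_sequentially by blast
        define q where "q n = cj (adj2 (Dm (mu (\<sigma> n)))) (\<phi> n)" for n
        have key: "q n \<in> ?G' \<and> \<phi> n = cj (Dm (mu (\<sigma> n))) (q n) \<and> 0 < mu (\<sigma> n) \<and> mu (\<sigma> n) \<le> 1"
          if n: "n \<ge> N" for n
        proof -
          have sl: "\<sigma> n < 1"
          proof (rule ccontr)
            assume "\<not> \<sigma> n < 1"
            then have "\<phi> n \<in> pm_one" using phimem[of n] by (simp add: \<gamma>_def)
            then show False using N[OF n] by auto
          qed
          have mp: "0 < mu (\<sigma> n)" by (rule mupos[OF sl])
          have m1: "mu (\<sigma> n) \<le> 1" by (simp add: mu_def)
          have dD: "det (Dm (mu (\<sigma> n))) \<noteq> 0" using mp by (simp add: det_Dm)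
          obtain x where x: "x \<in> \<Gamma>" "\<phi> n = cj (C (\<sigma> n)) x" using phimem[of n] sl by (auto simp: \<gamma>_def)
          have Ce: "C (\<sigma> n) = Dm (mu (\<sigma> n)) ** Rp 1" using N[OF n] by (intro Chalf) auto
          have ph: "\<phi> n = cj (Dm (mu (\<sigma> n))) (cj (Rp 1) x)" using x(2) Ce dD d1 by (simp add: cj_comp)
          then have "q n = cj (Rp 1) x" using dD by (simp add: q_def)
          then show ?thesis using ph x(1) mp m1 by auto
        qed
        define Kq where "Kq = max Bb (max 1 (2*R*(R*(1+Bb\<^sup>2)+Bb)\<^sup>2))"
        have qent: "q n $1$1 = \<phi> n $1$1 \<and> q n $2$2 = \<phi> n $2$2 \<and> q n $2$1 = of_real (mu (\<sigma> n)) * \<phi> n $2$1"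
          if n: "n \<ge> N" for n
        proof -
          have m0: "mu (\<sigma> n) \<noteq> 0" using key[OF n] by simp
          have ph: "\<phi> n = cj (Dm (mu (\<sigma> n))) (q n)" using key[OF n] by simp
          show ?thesis unfolding ph using cj_Dm_nth[OF m0, of "q n"] m0 by simp
        qed
        have q21b: "cmod (q n $2$1) \<le> mu (\<sigma> n) * Bb" if n: "n \<ge> N" for n
        proof -
          have "cmod (q n $2$1) = mu (\<sigma> n) * cmod (\<phi> n $2$1)"
            using qent[OF n] key[OF n] by (simp add: norm_mult)
          also have "\<dots> \<le> mu (\<sigma> n) * Bb" by (rule mult_left_mono[OF ent]) (use key[OF n] in auto)
          finally show ?thesis .
        qed
        have qb: "\<forall>i j. cmod (q n $i$j) \<le> Kq" if n: "n \<ge> N" for n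
        proof -
          have inG: "q n \<in> ?G'" using key[OF n] by simp
          have b1: "1 \<le> R*((cmod(q n$2$1))\<^sup>2 + (cmod(q n$2$2))\<^sup>2)"
            and b2: "cmod(q n$1$1 * cnj(q n$2$1) + q n$1$2*cnj(q n$2$2)) \<le> R*((cmod(q n$2$1))\<^sup>2 + (cmod(q n$2$2))\<^sup>2)"
            using B inG unfolding Bnd_def by auto
          have a11: "cmod (q n $1$1) \<le> Bb" and a22: "cmod (q n $2$2) \<le> Bb" using qent[OF n] ent by auto
          have "mu (\<sigma> n) * Bb < (1/(2*R*Bb)) * Bb" using N[OF n] Bb(1) by (intro mult_strict_right_mono) auto
          then have c21: "cmod (q n $2$1) < 1/(2*R)" using q21b[OF n] Bb(1) by simp
          have "cmod (q n$1$2 * cnj (q n$2$2)) = cmod ((q n$1$1 * cnj(q n$2$1) + q n$1$2*cnj(q n$2$2)) - q n$1$1 * cnj(q n$2$1))"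
            by simp
          also have "\<dots> \<le> cmod (q n$1$1 * cnj(q n$2$1) + q n$1$2*cnj(q n$2$2)) + cmod (q n$1$1 * cnj(q n$2$1))"
            by (rule norm_triangle_ineq4)
          finally have tri: "cmod (q n$1$2) * cmod (q n$2$2) \<le> cmod (q n$1$1 * cnj(q n$2$1) + q n$1$2*cnj(q n$2$2)) + cmod (q n$1$1) * cmod (q n$2$1)"
            by (simp add: norm_mult)
          have e12: "cmod (q n $1$2) \<le> max 1 (2*R*(R*(1+Bb\<^sup>2)+Bb)\<^sup>2)"
            by (rule real_qbound[OF R1 Bb(1) _ a11 _ a22 _ _ c21 b1 b2 tri]) auto
          have "1/(2*R) \<le> 1" using R1 by (simp add: field_simps)
          then have "cmod (q n $2$1) \<le> Kq" using c21 unfolding Kq_def by linarith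
          then show ?thesis using a11 a22 e12 unfolding Kq_def by (auto simp: forall_2)
        qed
        define q' where "q' = (\<lambda>n. q (n + N))"
        have "range q' \<subseteq> {x\<in>?G'. \<forall>i j. cmod (x$i$j) \<le> Kq}"
          using key qb by (auto simp: q'_def)
        then have fr: "finite (range q')" using kl_finite_bounded[OF K'] finite_subset by blast
        obtain v where v: "v \<in> range q'" "infinite (q' -` {v})"
          using inf_img_fin_domE[OF fr infinite_UNIV_nat] by blast
        have vG: "v \<in> ?G'" using v(1) key by (auto simp: q'_def)
        have v21: "v $2$1 = 0"
        proof (rule ccontr)
          assume nz: "v $2$1 \<noteq> 0"
          have "\<forall>\<^sub>F n in sequentially. mu (\<sigma> n) < cmod (v$2$1) / Bb"
            using order_tendstoD(2)[OF mul] nz Bb(1) by simp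
          then obtain M where M: "\<And>n. n \<ge> M \<Longrightarrow> mu (\<sigma> n) < cmod (v$2$1) / Bb"
            unfolding eventually_sequentially by blast
          obtain m where m: "m \<ge> M" "q' m = v" using v(2) unfolding infinite_nat_iff_unbounded_le by blast
          have "mu (\<sigma> (m+N)) * Bb < cmod (v$2$1) / Bb * Bb"
            using M[of "m+N"] m(1) Bb(1) by (intro mult_strict_right_mono) auto
          moreover have "cmod (v$2$1) \<le> mu (\<sigma> (m+N)) * Bb" using q21b[of "m+N"] m(2) by (simp add: q'_def)
          ultimately show False using Bb(1) by simp
        qed
        have vp: "v \<in> pm_one" by (rule triangular_trivial[OF K' B vG v21])
        obtain m where m: "q' m = v" using v(1) by auto
        have "\<phi> (m+N) = cj (Dm (mu (\<sigma> (m+N)))) v" using key[of "m+N"] m by (simp add: q'_def)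
        also have "\<dots> = v" using vp key[of "m+N"] by (intro cj_pm_one) (auto simp: det_Dm)
        finally have "\<phi> (m+N) \<in> pm_one" using vp by simp
        then show False using N[of "m+N"] by auto
      qed
    next
      fix A assume A: "A \<in> \<gamma> t"
      then have Ap: "A \<in> pm_one" using t1 g1 by simp
      have "\<forall>n. A \<in> (\<gamma> \<circ> s) n"
      proof
        fix n show "A \<in> (\<gamma> \<circ> s) n"
        proof (cases "s n < 1")
          case True
          then have "det (C (s n)) \<noteq> 0" using Cdet s(1) by auto
          then have "A = cj (C (s n)) A" using Ap by (simp add: cj_pm_one)
          moreover have "A \<in> \<Gamma>" using Ap kl_pm[OF K] by auto
          ultimately show ?thesis using True by (auto simp: \<gamma>_def)
        qed (use Ap in \<open>simp add: \<gamma>_def\<close>)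
      qed
      then show "\<exists>\<psi>. (\<forall>n. \<psi> n \<in> (\<gamma> \<circ> s) n) \<and> \<psi> \<longlonglongrightarrow> A" by (intro exI[of _ "\<lambda>n. A"]) auto
    qed
  qed
  have "geom_path \<gamma>" unfolding geom_path_def using kl cont by blast
  then show ?thesis using g0 g1 by blast
qed

lemma lagrange2:
  "((cmod x1)\<^sup>2 + (cmod x2)\<^sup>2) * ((cmod y1)\<^sup>2 + (cmod y2)\<^sup>2) =
   (cmod (x1*cnj y1 + x2*cnj y2))\<^sup>2 + (cmod (x1*y2 - x2*y1))\<^sup>2"
proof -
  have "complex_of_real (((cmod x1)\<^sup>2 + (cmod x2)\<^sup>2) * ((cmod y1)\<^sup>2 + (cmod y2)\<^sup>2)) =
        complex_of_real ((cmod (x1*cnj y1 + x2*cnj y2))\<^sup>2 + (cmod (x1*y2 - x2*y1))\<^sup>2)"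
    by (simp only: of_real_mult of_real_add complex_norm_square complex_cnj_add complex_cnj_mult
        complex_cnj_diff complex_cnj_cnj) (simp add: algebra_simps)
  then show ?thesis by (simp only: of_real_eq_iff)
qed


lemma hyp_act_base:
  "hyp_act g base_point = ((g$1$1 * cnj (g$2$1) + g$1$2 * cnj (g$2$2)) / of_real ((cmod (g$2$1))\<^sup>2 + (cmod (g$2$2))\<^sup>2),
      1 / ((cmod (g$2$1))\<^sup>2 + (cmod (g$2$2))\<^sup>2))"
  by (simp add: hyp_act_def base_point_def Let_def algebra_simps)

lemma Npos: "det (g::cmat) = 1 \<Longrightarrow> 0 < (cmod (g$2$1))\<^sup>2 + (cmod (g$2$2))\<^sup>2"
proof (rule ccontr)
  assume d: "det g = 1" and "\<not> 0 < (cmod (g$2$1))\<^sup>2 + (cmod (g$2$2))\<^sup>2"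
  then have "(cmod (g$2$1))\<^sup>2 + (cmod (g$2$2))\<^sup>2 = 0"
    by (metis add_nonneg_nonneg linorder_neqE_linordered_idom not_less zero_le_power2)
  then have "g$2$1 = 0" "g$2$2 = 0" by (simp_all add: add_nonneg_eq_0_iff)
  then show False using d by (simp add: det2)
qed

lemma L1:
  assumes K: "kleinian \<Gamma>" and bd: "bounded ((\<lambda>A. hyp_act A base_point) ` \<Gamma>)"
  shows "\<exists>R. Bnd \<Gamma> R"
proof -
  obtain a where a: "\<And>x. x \<in> (\<lambda>A. hyp_act A base_point) ` \<Gamma> \<Longrightarrow> norm x \<le> a"
    using bd unfolding bounded_iff by blast
  have "Bnd \<Gamma> a" unfolding Bnd_def
  proof
    fix g assume g: "g \<in> \<Gamma>"
    define N where "N = (cmod (g$2$1))\<^sup>2 + (cmod (g$2$2))\<^sup>2"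
    define W where "W = g$1$1 * cnj (g$2$1) + g$1$2 * cnj (g$2$2)"
    have Np: "N > 0" unfolding N_def by (rule Npos[OF kl_det[OF K g]])
    have h: "hyp_act g base_point = (W / of_real N, 1/N)" by (simp add: hyp_act_base N_def W_def)
    have "hyp_act g base_point \<in> (\<lambda>A. hyp_act A base_point) ` \<Gamma>" using g by blast
    then have na: "norm (W / of_real N, 1/N) \<le> a" using a h by metis
    have "1/N \<le> a" using order_trans[OF norm_snd_le na] Np by simp
    then have e1: "1 \<le> a * N" using Np by (simp add: field_simps)
    have "cmod W / N \<le> a" using order_trans[OF norm_fst_le na] Np by (simp add: norm_divide)
    then have e2: "cmod W \<le> a * N" using Np by (simp add: field_simps)
    show "1 \<le> a * N \<and> cmod W \<le> a * N" using e1 e2 by simp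
  qed
  then show ?thesis by blast
qed

lemma unit_inner:
  fixes s :: real
  assumes h: "s\<^sup>2 * (1 + (cmod z)\<^sup>2) = 1"
  shows "(of_real s*(x1*z + x2)) * cnj (of_real s*(y1*z+y2)) + (of_real s*(-x1 + x2*cnj z)) * cnj (of_real s*(-y1+y2*cnj z))
         = x1 * cnj y1 + x2 * cnj y2"
proof -
  have hc: "(complex_of_real s)\<^sup>2 * (1 + z * cnj z) = 1"
    using arg_cong[OF h, of complex_of_real] by (simp add: complex_norm_square[symmetric])
  have "(of_real s*(x1*z + x2)) * cnj (of_real s*(y1*z+y2)) + (of_real s*(-x1 + x2*cnj z)) * cnj (of_real s*(-y1+y2*cnj z))
      = ((complex_of_real s)\<^sup>2 * (1 + z * cnj z)) * (x1 * cnj y1 + x2 * cnj y2)"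
    by (simp add: algebra_simps power2_eq_square)
  then show ?thesis using hc by simp
qed

lemma unit_norm:
  fixes s :: real
  assumes h: "s\<^sup>2 * (1 + (cmod z)\<^sup>2) = 1"
  shows "(cmod (of_real s*(x1*z + x2)))\<^sup>2 + (cmod (of_real s*(-x1 + x2*cnj z)))\<^sup>2 = (cmod x1)\<^sup>2 + (cmod x2)\<^sup>2"
proof -
  have "complex_of_real ((cmod (of_real s*(x1*z + x2)))\<^sup>2 + (cmod (of_real s*(-x1 + x2*cnj z)))\<^sup>2)
      = complex_of_real ((cmod x1)\<^sup>2 + (cmod x2)\<^sup>2)"
    unfolding of_real_add complex_norm_square by (rule unit_inner[OF h])
  then show ?thesis by (simp only: of_real_eq_iff)
qed

lemma cmod_diff_sq: "(cmod (p - q))\<^sup>2 \<le> 2*(cmod p)\<^sup>2 + 2*(cmod q)\<^sup>2"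
proof -
  have "cmod (p - q) \<le> cmod p + cmod q" by (rule norm_triangle_ineq4)
  then have "(cmod (p - q))\<^sup>2 \<le> (cmod p + cmod q)\<^sup>2" by (intro power_mono) auto
  also have "\<dots> \<le> 2*(cmod p)\<^sup>2 + 2*(cmod q)\<^sup>2"
    using sum_squares_bound[of "cmod p" "cmod q"] by (simp add: power2_eq_square algebra_simps)
  finally show ?thesis .
qed

lemma alg_bound:
  fixes a b c d z :: complex and sr \<epsilon> :: real
  assumes det: "a*d - b*c = 1" and hs: "sr\<^sup>2 * (1 + (cmod z)\<^sup>2) = 1" and sr: "sr > 0" and ep: "\<epsilon> > 0"
    and orb: "\<epsilon>\<^sup>2 \<le> (cmod ((a * cnj c + b * cnj d) / of_real ((cmod c)\<^sup>2 + (cmod d)\<^sup>2) - z))\<^sup>2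
                  + (1 / ((cmod c)\<^sup>2 + (cmod d)\<^sup>2))\<^sup>2"
  shows "1 \<le> max (1/(sr\<^sup>2*\<epsilon>)) (max 1 (2*(sr*(1+(cmod z)\<^sup>2))\<^sup>2/(sr\<^sup>2*\<epsilon>\<^sup>2) + 2*(cmod z)\<^sup>2))
              * ((cmod (-sr*a + sr*z*c))\<^sup>2 + (cmod (-sr*b + sr*z*d))\<^sup>2)
       \<and> cmod ((sr*cnj z*a + sr*c) * cnj (-sr*a + sr*z*c) + (sr*cnj z*b + sr*d) * cnj (-sr*b + sr*z*d))
         \<le> max (1/(sr\<^sup>2*\<epsilon>)) (max 1 (2*(sr*(1+(cmod z)\<^sup>2))\<^sup>2/(sr\<^sup>2*\<epsilon>\<^sup>2) + 2*(cmod z)\<^sup>2))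
              * ((cmod (-sr*a + sr*z*c))\<^sup>2 + (cmod (-sr*b + sr*z*d))\<^sup>2)"
proof -
  define N where "N = (cmod c)\<^sup>2 + (cmod d)\<^sup>2"
  define W where "W = a * cnj c + b * cnj d"
  define x1 where "x1 = -sr*a + sr*z*c"
  define x2 where "x2 = -sr*b + sr*z*d"
  define y1 where "y1 = sr*cnj z*a + sr*c"
  define y2 where "y2 = sr*cnj z*b + sr*d"
  define U where "U = (cmod x1)\<^sup>2 + (cmod x2)\<^sup>2"
  define L where "L = sr*(1+(cmod z)\<^sup>2)"
  define K1 where "K1 = 2*L\<^sup>2/(sr\<^sup>2*\<epsilon>\<^sup>2) + 2*(cmod z)\<^sup>2"
  have Np: "N > 0"
  proof (rule ccontr)
    assume "\<not> N > 0"
    then have "(cmod c)\<^sup>2 + (cmod d)\<^sup>2 = 0" unfolding N_def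
      by (metis add_nonneg_nonneg linorder_neqE_linordered_idom not_less zero_le_power2)
    then have "c = 0" "d = 0" by (simp_all add: add_nonneg_eq_0_iff)
    then show False using det by simp
  qed
  have Up: "U \<ge> 0" unfolding U_def by simp
  have lag1: "U * N = (cmod (x1 * cnj c + x2 * cnj d))\<^sup>2 + (cmod (x1 * d - x2 * c))\<^sup>2"
    unfolding U_def N_def by (rule lagrange2)
  have i1: "x1 * cnj c + x2 * cnj d = of_real sr * (z * of_real N - W)"
    unfolding x1_def x2_def N_def W_def of_real_add complex_norm_square by (simp add: algebra_simps)
  have i2: "x1 * d - x2 * c = - of_real sr"
  proof -
    have "x1 * d - x2 * c = - of_real sr * (a*d - b*c)" unfolding x1_def x2_def by (simp add: algebra_simps)
    then show ?thesis using det by simp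
  qed
  have UN: "U * N = sr\<^sup>2 * ((cmod (z * of_real N - W))\<^sup>2 + 1)"
  proof -
    have "U * N = (cmod (of_real sr * (z * of_real N - W)))\<^sup>2 + (cmod (- complex_of_real sr))\<^sup>2"
      unfolding lag1 i1 i2 ..
    also have "\<dots> = sr\<^sup>2 * ((cmod (z * of_real N - W))\<^sup>2 + 1)"
      using sr by (simp only: norm_mult norm_minus_cancel norm_of_real power_mult_distrib) (simp add: algebra_simps)
    finally show ?thesis .
  qed
  have orb': "\<epsilon>\<^sup>2 * N\<^sup>2 \<le> (cmod (z * of_real N - W))\<^sup>2 + 1"
  proof -
    have "W / of_real N - z = (W - z * of_real N) / of_real N" using Np by (simp add: field_simps)
    then have "cmod (W / of_real N - z) = cmod (z * of_real N - W) / N"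
      using Np by (simp add: norm_divide norm_minus_commute)
    then have "\<epsilon>\<^sup>2 \<le> (cmod (z * of_real N - W))\<^sup>2 / N\<^sup>2 + 1 / N\<^sup>2"
      using orb unfolding N_def[symmetric] W_def[symmetric] by (simp add: power_divide)
    then have "\<epsilon>\<^sup>2 \<le> ((cmod (z * of_real N - W))\<^sup>2 + 1) / N\<^sup>2" by (simp add: add_divide_distrib)
    then show ?thesis using Np by (simp add: field_simps)
  qed
  have U1: "sr\<^sup>2 * \<epsilon>\<^sup>2 * N \<le> U"
  proof -
    have "sr\<^sup>2 * (\<epsilon>\<^sup>2 * N\<^sup>2) \<le> U * N" unfolding UN using orb' by (intro mult_left_mono) auto
    then have "(sr\<^sup>2 * \<epsilon>\<^sup>2 * N) * N \<le> U * N" by (simp add: power2_eq_square algebra_simps)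
    then show ?thesis using Np by simp
  qed
  have U2: "sr\<^sup>2 \<le> U * N" unfolding UN
    using sr by (simp add: algebra_simps)
  have Uge: "sr\<^sup>2 * \<epsilon> \<le> U"
  proof -
    have "(sr\<^sup>2 * \<epsilon>)\<^sup>2 = (sr\<^sup>2 * \<epsilon>\<^sup>2 * N) * (sr\<^sup>2 / N)" using Np by (simp add: power2_eq_square field_simps)
    also have "\<dots> \<le> U * (sr\<^sup>2 / N)" using U1 Np by (intro mult_right_mono) auto
    also have "\<dots> \<le> U * U"
    proof (intro mult_left_mono Up)
      show "sr\<^sup>2 / N \<le> U" using U2 Np by (simp add: field_simps)
    qed
    finally have "(sr\<^sup>2 * \<epsilon>)\<^sup>2 \<le> U\<^sup>2" by (simp add: power2_eq_square)
    then show ?thesis using Up by (rule power2_le_imp_le)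
  qed
  have Upos: "U > 0" using Uge sr ep by (smt (verit) mult_pos_pos zero_less_power)
  have B1: "1 \<le> (1/(sr\<^sup>2*\<epsilon>)) * U" using Uge sr ep by (simp add: field_simps)
  have zz: "(complex_of_real (cmod z))\<^sup>2 = z * cnj z" by (metis complex_norm_square of_real_power)
  have y1e: "y1 = of_real L * c - cnj z * x1"
    unfolding y1_def x1_def L_def by (simp add: zz algebra_simps)
  have y2e: "y2 = of_real L * d - cnj z * x2"
    unfolding y2_def x2_def L_def by (simp add: zz algebra_simps)
  have Y: "(cmod y1)\<^sup>2 + (cmod y2)\<^sup>2 \<le> 2*L\<^sup>2 * N + 2*(cmod z)\<^sup>2 * U"
  proof -
    have "(cmod y1)\<^sup>2 \<le> 2*(cmod (of_real L * c))\<^sup>2 + 2*(cmod (cnj z * x1))\<^sup>2" unfolding y1e by (rule cmod_diff_sq)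
    moreover have "(cmod y2)\<^sup>2 \<le> 2*(cmod (of_real L * d))\<^sup>2 + 2*(cmod (cnj z * x2))\<^sup>2" unfolding y2e by (rule cmod_diff_sq)
    ultimately show ?thesis unfolding N_def U_def by (simp add: norm_mult power_mult_distrib algebra_simps)
  qed
  have CS: "(cmod (y1 * cnj x1 + y2 * cnj x2))\<^sup>2 \<le> ((cmod y1)\<^sup>2 + (cmod y2)\<^sup>2) * U"
    unfolding U_def lagrange2 by simp
  have NU: "N \<le> U / (sr\<^sup>2 * \<epsilon>\<^sup>2)" using U1 sr ep by (simp add: field_simps)
  have "(cmod (y1 * cnj x1 + y2 * cnj x2))\<^sup>2 \<le> (2*L\<^sup>2 * N + 2*(cmod z)\<^sup>2 * U) * U"
    using CS Y Up by (meson mult_right_mono order_trans)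
  also have "\<dots> \<le> (2*L\<^sup>2 * (U / (sr\<^sup>2 * \<epsilon>\<^sup>2)) + 2*(cmod z)\<^sup>2 * U) * U"
    using NU Up by (intro mult_right_mono add_right_mono mult_left_mono) auto
  also have "\<dots> = K1 * U\<^sup>2" unfolding K1_def by (simp add: power2_eq_square field_simps)
  finally have "((cmod (y1 * cnj x1 + y2 * cnj x2)) / U)\<^sup>2 \<le> K1" using Upos by (simp add: power_divide field_simps)
  then have "cmod (y1 * cnj x1 + y2 * cnj x2) / U \<le> max 1 K1" by (intro sq_le_imp_le_max) (use Up in auto)
  then have B2: "cmod (y1 * cnj x1 + y2 * cnj x2) \<le> max 1 K1 * U" using Upos by (simp add: field_simps)
  have m1: "(1/(sr\<^sup>2*\<epsilon>)) * U \<le> max (1/(sr\<^sup>2*\<epsilon>)) (max 1 K1) * U" using Up by (intro mult_right_mono) auto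
  have m2: "max 1 K1 * U \<le> max (1/(sr\<^sup>2*\<epsilon>)) (max 1 K1) * U" using Up by (intro mult_right_mono) auto
  show ?thesis using B1 B2 m1 m2
    unfolding U_def x1_def x2_def y1_def y2_def K1_def L_def by linarith
qed


lemma L2:
  assumes K: "kleinian \<Gamma>" and nc: "(\<zeta>, 0) \<notin> closure ((\<lambda>A. hyp_act A base_point) ` \<Gamma>)"
    and srd: "sr = 1/sqrt(1+(cmod \<zeta>)\<^sup>2)"
    and Pd: "P = mk (of_real sr * cnj \<zeta>) (of_real sr) (- of_real sr) (of_real sr * \<zeta>)"
  shows "\<exists>R. Bnd (cj P ` \<Gamma>) R"
proof -
  have sp: "sr > 0" unfolding srd by (simp add: add_pos_nonneg)
  have hs: "sr\<^sup>2 * (1 + (cmod \<zeta>)\<^sup>2) = 1"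
  proof -
    have "1 + (cmod \<zeta>)\<^sup>2 > 0" by (simp add: add_pos_nonneg)
    then show ?thesis unfolding srd by (simp add: power_divide)
  qed
  have hc: "(complex_of_real sr)\<^sup>2 * (1 + \<zeta> * cnj \<zeta>) = 1"
    using arg_cong[OF hs, of complex_of_real] by (simp add: complex_norm_square[symmetric])
  have dP: "det P = 1"
  proof -
    have "det P = (complex_of_real sr)\<^sup>2 * (1 + \<zeta> * cnj \<zeta>)" unfolding Pd det2 by (simp add: power2_eq_square algebra_simps)
    then show ?thesis using hc by simp
  qed
  obtain \<epsilon> where ep: "\<epsilon> > 0" and far: "\<And>y. y \<in> (\<lambda>A. hyp_act A base_point) ` \<Gamma> \<Longrightarrow> \<epsilon> \<le> dist y (\<zeta>, 0)"
    using nc unfolding closure_approachable by (meson not_less)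
  define R0 where "R0 = max (1/(sr\<^sup>2*\<epsilon>)) (max 1 (2*(sr*(1+(cmod \<zeta>)\<^sup>2))\<^sup>2/(sr\<^sup>2*\<epsilon>\<^sup>2) + 2*(cmod \<zeta>)\<^sup>2))"
  have "Bnd (cj P ` \<Gamma>) R0" unfolding Bnd_def
  proof
    fix g' assume "g' \<in> cj P ` \<Gamma>"
    then obtain g where g: "g \<in> \<Gamma>" "g' = cj P g" by auto
    define a where "a = g$1$1"
    define b where "b = g$1$2"
    define c where "c = g$2$1"
    define d where "d = g$2$2"
    have det: "a*d - b*c = 1" using kl_det[OF K g(1)] by (simp add: det2 a_def b_def c_def d_def)
    have "\<epsilon> \<le> dist (hyp_act g base_point) (\<zeta>, 0)" using far g(1) by blast
    also have "\<dots> = sqrt ((cmod ((a * cnj c + b * cnj d) / of_real ((cmod c)\<^sup>2 + (cmod d)\<^sup>2) - \<zeta>))\<^sup>2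
                  + (1 / ((cmod c)\<^sup>2 + (cmod d)\<^sup>2))\<^sup>2)"
      by (simp only: hyp_act_base dist_Pair_Pair) (simp add: dist_norm a_def b_def c_def d_def)
    finally have orb: "\<epsilon>\<^sup>2 \<le> (cmod ((a * cnj c + b * cnj d) / of_real ((cmod c)\<^sup>2 + (cmod d)\<^sup>2) - \<zeta>))\<^sup>2
                  + (1 / ((cmod c)\<^sup>2 + (cmod d)\<^sup>2))\<^sup>2"
      using ep by (metis (no_types, lifting) add_nonneg_nonneg less_eq_real_def power_mono real_sqrt_pow2 zero_le_power2)
    define x1 where "x1 = -sr*a + sr*\<zeta>*c"
    define x2 where "x2 = -sr*b + sr*\<zeta>*d"
    define y1 where "y1 = sr*cnj \<zeta>*a + sr*c"
    define y2 where "y2 = sr*cnj \<zeta>*b + sr*d"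
    have e21: "g'$2$1 = of_real sr * (x1 * \<zeta> + x2)" and e22: "g'$2$2 = of_real sr * (-x1 + x2 * cnj \<zeta>)"
      and e11: "g'$1$1 = of_real sr * (y1 * \<zeta> + y2)" and e12: "g'$1$2 = of_real sr * (-y1 + y2 * cnj \<zeta>)"
      unfolding g(2) cj_def dP x1_def x2_def y1_def y2_def a_def b_def c_def d_def
      by (simp_all add: Pd algebra_simps)
    have NN: "(cmod (g'$2$1))\<^sup>2 + (cmod (g'$2$2))\<^sup>2 = (cmod x1)\<^sup>2 + (cmod x2)\<^sup>2"
      unfolding e21 e22 by (rule unit_norm[OF hs])
    have WW: "g'$1$1 * cnj (g'$2$1) + g'$1$2 * cnj (g'$2$2) = y1 * cnj x1 + y2 * cnj x2"
      unfolding e21 e22 e11 e12 by (rule unit_inner[OF hs])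
    have ab: "1 \<le> R0 * ((cmod x1)\<^sup>2 + (cmod x2)\<^sup>2) \<and> cmod (y1 * cnj x1 + y2 * cnj x2) \<le> R0 * ((cmod x1)\<^sup>2 + (cmod x2)\<^sup>2)"
      unfolding R0_def x1_def x2_def y1_def y2_def by (rule alg_bound[OF det hs sp ep orb])
    show "1 \<le> R0 * ((cmod (g'$2$1))\<^sup>2 + (cmod (g'$2$2))\<^sup>2) \<and>
      cmod (g'$1$1 * cnj (g'$2$1) + g'$1$2 * cnj (g'$2$2)) \<le> R0 * ((cmod (g'$2$1))\<^sup>2 + (cmod (g'$2$2))\<^sup>2)"
      unfolding NN WW by (rule ab)
  qed
  then show ?thesis by blast
qed

theorem mainTheorem6:
  fixes \<Gamma> :: "cmat set"
  assumes "kleinian \<Gamma>"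
    and "domain_of_discontinuity \<Gamma> \<noteq> {}"
  shows "\<exists>\<gamma>. geom_path \<gamma> \<and> \<gamma> 0 = \<Gamma> \<and> \<gamma> 1 = pm_one"
proof -
  obtain \<xi> where xi: "\<xi> \<notin> limit_set \<Gamma>" using assms(2) by (auto simp: domain_of_discontinuity_def)
  show ?thesis
  proof (cases \<xi>)
    case None
    then have "bounded ((\<lambda>A. hyp_act A base_point) ` \<Gamma>)" using xi
      by (auto simp: limit_set_def split: if_splits)
    then obtain R where R: "Bnd \<Gamma> R" using L1[OF assms(1)] by blast
    show ?thesis
      by (rule main_path[of \<Gamma> "\<lambda>_. mat 1" R]) (use assms(1) R in \<open>auto simp: det2\<close>)
  next
    case (Some \<zeta>)
    then have nc: "(\<zeta>, 0) \<notin> closure ((\<lambda>A. hyp_act A base_point) ` \<Gamma>)" using xi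
      by (auto simp: limit_set_def)
    define sr where "sr = 1/sqrt(1+(cmod \<zeta>)\<^sup>2)"
    define P where "P = mk (of_real sr * cnj \<zeta>) (of_real sr) (- of_real sr) (of_real sr * \<zeta>)"
    obtain R where R: "Bnd (cj P ` \<Gamma>) R" using L2[OF assms(1) nc sr_def P_def] by blast
    have sp: "sr > 0" unfolding sr_def by (simp add: add_pos_nonneg)
    define Rp where "Rp = (\<lambda>r::real. (1-r) *\<^sub>R (mat 1::cmat) + r *\<^sub>R P)"
    have Rc: "isCont Rp x" for x unfolding Rp_def by (intro continuous_intros)
    have R0: "Rp 0 = mat 1" by (simp add: Rp_def)
    have R1: "Rp 1 = P" by (simp add: Rp_def)
    have Rd: "det (Rp r) \<noteq> 0" if "0 \<le> r" "r \<le> 1" for r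
    proof (cases "r = 0")
      case True then show ?thesis by (simp add: R0 det2)
    next
      case False
      define w where "w = complex_of_real (1-r) + of_real (r * sr) * \<zeta>"
      have "det (Rp r) = w * cnj w + of_real ((r * sr)\<^sup>2)"
        unfolding Rp_def det2 w_def P_def
        by (simp only: vector_add_component vector_scaleR_component mat1_nth mk_nth)
           (simp add: scaleR_conv_of_real algebra_simps power2_eq_square)
      also have "\<dots> = of_real ((cmod w)\<^sup>2 + (r * sr)\<^sup>2)"
        by (simp only: of_real_add complex_norm_square)
      finally have dd: "det (Rp r) = of_real ((cmod w)\<^sup>2 + (r * sr)\<^sup>2)" .
      have "(r * sr)\<^sup>2 > 0" using False sp by simp
      then have "(cmod w)\<^sup>2 + (r * sr)\<^sup>2 > 0" by (simp add: add_nonneg_pos)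
      then have "complex_of_real ((cmod w)\<^sup>2 + (r * sr)\<^sup>2) \<noteq> 0" by (simp only: of_real_eq_0_iff)
      then show ?thesis unfolding dd .
    qed
    show ?thesis
      by (rule main_path[of \<Gamma> Rp R, OF assms(1) Rc R0 Rd]) (use R R1 in auto)
  qed
qed


end
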